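(* For any $P,Q\in\mathcal{PP}(n)$, $P\leq Q$ if and only if $\iota(Q)\leq\iota(P)$.
   Context: A plane poset is a finite set with two partial orders $\leq_h,\leq_r$ such that two distinct elements are $\leq_h$-comparable iff they are not $\leq_r$-comparable; $\mathcal{PP}(n)$ is the set of isomorphism classes of plane posets with $n$ elements. On a plane poset, $x\leq y$ iff ($x\leq_h y$ or $x\leq_r y$) is a total order (known fact). For $P,Q\in\mathcal{PP}(n)$, $\theta_{P,Q}$ is the increasing bijection $P\to Q$, and $P\leq Q$ means: for all $x,y\in P$, $\theta_{P,Q}(x)\leq_h\theta_{P,Q}(y)$ in $Q$ implies $x\leq_h y$ in $P$. For a plane poset $P=(P,\leq_h,\leq_r)$, $\iota(P)=(P,\leq_r,\leq_h)$ (the two orders exchanged); it is again a plane poset and $\iota$ is an involution. *)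

theory Defs
  imports Main "HOL-Library.FuncSet"
begin

text \<open>A plane poset is represented concretely as a triple (carrier, heap order, right order);
  orders are relations given as sets of pairs.  Isomorphism classes are handled by working
  with arbitrary representatives (all notions below are invariant under isomorphism).\<close>

type_synonym 'a pposet = "'a set \<times> 'a rel \<times> 'a rel"

definition carrier_pp :: "'a pposet \<Rightarrow> 'a set" where "carrier_pp P = fst P"
definition hord :: "'a pposet \<Rightarrow> 'a rel" where "hord P = fst (snd P)"
definition rord :: "'a pposet \<Rightarrow> 'a rel" where "rord P = snd (snd P)"

definition plane_poset :: "'a pposet \<Rightarrow> bool" where
  "plane_poset P \<longleftrightarrow> finite (carrier_pp P)
     \<and> partial_order_on (carrier_pp P) (hord P)
     \<and> partial_order_on (carrier_pp P) (rord P)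
     \<and> (\<forall>x\<in>carrier_pp P. \<forall>y\<in>carrier_pp P. x \<noteq> y \<longrightarrow>
          (((x, y) \<in> hord P \<or> (y, x) \<in> hord P) \<longleftrightarrow> \<not> ((x, y) \<in> rord P \<or> (y, x) \<in> rord P)))"

definition tord :: "'a pposet \<Rightarrow> 'a rel" where "tord P = hord P \<union> rord P"

definition iota :: "'a pposet \<Rightarrow> 'a pposet" where
  "iota P = (carrier_pp P, rord P, hord P)"

definition theta :: "'a pposet \<Rightarrow> 'b pposet \<Rightarrow> ('a \<Rightarrow> 'b)" where
  "theta P Q = (THE f. f \<in> extensional (carrier_pp P)
      \<and> bij_betw f (carrier_pp P) (carrier_pp Q)
      \<and> (\<forall>x\<in>carrier_pp P. \<forall>y\<in>carrier_pp P. (x, y) \<in> tord P \<longrightarrow> (f x, f y) \<in> tord Q))"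

definition pp_le :: "'a pposet \<Rightarrow> 'b pposet \<Rightarrow> bool" where
  "pp_le P Q \<longleftrightarrow> (\<forall>x\<in>carrier_pp P. \<forall>y\<in>carrier_pp P.
      (theta P Q x, theta P Q y) \<in> hord Q \<longrightarrow> (x, y) \<in> hord P)"

end

theory Submission
  imports Defs
begin

lemma pp_unfold:
  assumes "plane_poset P"
  shows "finite (carrier_pp P)"
    and "hord P \<subseteq> carrier_pp P \<times> carrier_pp P" "rord P \<subseteq> carrier_pp P \<times> carrier_pp P"
    and "\<And>x. x \<in> carrier_pp P \<Longrightarrow> (x,x) \<in> hord P"
    and "\<And>x. x \<in> carrier_pp P \<Longrightarrow> (x,x) \<in> rord P"
    and "trans (hord P)" "trans (rord P)" "antisym (hord P)" "antisym (rord P)"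
    and "\<And>x y. x\<in>carrier_pp P \<Longrightarrow> y\<in>carrier_pp P \<Longrightarrow> x \<noteq> y \<Longrightarrow>
          (((x, y) \<in> hord P \<or> (y, x) \<in> hord P) \<longleftrightarrow> \<not> ((x, y) \<in> rord P \<or> (y, x) \<in> rord P))"
  using assms unfolding plane_poset_def partial_order_on_def preorder_on_def refl_on_def
  by blast+

lemma tord_sub: "plane_poset P \<Longrightarrow> tord P \<subseteq> carrier_pp P \<times> carrier_pp P"
  using pp_unfold(2,3)[of P] unfolding tord_def by (simp add: Un_least)

lemma tord_refl: "plane_poset P \<Longrightarrow> x \<in> carrier_pp P \<Longrightarrow> (x,x) \<in> tord P"
  using pp_unfold(4)[of P x] unfolding tord_def by simp

lemma tord_total: "plane_poset P \<Longrightarrow> x \<in> carrier_pp P \<Longrightarrow> y \<in> carrier_pp P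
   \<Longrightarrow> (x,y) \<in> tord P \<or> (y,x) \<in> tord P"
proof -
  assume pp: "plane_poset P" and c: "x \<in> carrier_pp P" "y \<in> carrier_pp P"
  show ?thesis
  proof (cases "x = y")
    case True then show ?thesis using tord_refl[OF pp c(1)] by simp
  next
    case False
    hence "((x, y) \<in> hord P \<or> (y, x) \<in> hord P) = (\<not> ((x, y) \<in> rord P \<or> (y, x) \<in> rord P))"
      using pp_unfold(10)[OF pp c] by blast
    then show ?thesis unfolding tord_def by blast
  qed
qed

lemma tord_antisym: "plane_poset P \<Longrightarrow> (x,y) \<in> tord P \<Longrightarrow> (y,x) \<in> tord P \<Longrightarrow> x = y"
proof (rule ccontr)
  assume pp: "plane_poset P" and a: "(x,y) \<in> tord P" "(y,x) \<in> tord P" and ne: "x \<noteq> y"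
  have xy: "x \<in> carrier_pp P" "y \<in> carrier_pp P" using a tord_sub[OF pp] by blast+
  have i: "((x, y) \<in> hord P \<or> (y, x) \<in> hord P) = (\<not> ((x, y) \<in> rord P \<or> (y, x) \<in> rord P))"
    using pp_unfold(10)[OF pp xy ne] .
  have h: "(x,y) \<in> hord P \<Longrightarrow> (y,x) \<in> hord P \<Longrightarrow> False"
    using pp_unfold(8)[OF pp] ne unfolding antisym_def by blast
  have r: "(x,y) \<in> rord P \<Longrightarrow> (y,x) \<in> rord P \<Longrightarrow> False"
    using pp_unfold(9)[OF pp] ne unfolding antisym_def by blast
  show False using a i h r unfolding tord_def by blast
qed

lemma tord_trans: "plane_poset P \<Longrightarrow> (x,y) \<in> tord P \<Longrightarrow> (y,z) \<in> tord P \<Longrightarrow> (x,z) \<in> tord P"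
proof -
  assume pp: "plane_poset P" and a: "(x,y) \<in> tord P" "(y,z) \<in> tord P"
  have c: "x \<in> carrier_pp P" "y \<in> carrier_pp P" "z \<in> carrier_pp P" using a tord_sub[OF pp] by blast+
  note U = pp_unfold[OF pp]
  have tH: "\<And>a b c. (a,b) \<in> hord P \<Longrightarrow> (b,c) \<in> hord P \<Longrightarrow> (a,c) \<in> hord P"
    using U(6) unfolding trans_def by blast
  have tR: "\<And>a b c. (a,b) \<in> rord P \<Longrightarrow> (b,c) \<in> rord P \<Longrightarrow> (a,c) \<in> rord P"
    using U(7) unfolding trans_def by blast
  have xz: "x \<noteq> z \<Longrightarrow> (((x, z) \<in> hord P \<or> (z, x) \<in> hord P) \<longleftrightarrow> \<not> ((x, z) \<in> rord P \<or> (z, x) \<in> rord P))"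
    using U(10) c by blast
  have xy: "x \<noteq> y \<Longrightarrow> (((x, y) \<in> hord P \<or> (y, x) \<in> hord P) \<longleftrightarrow> \<not> ((x, y) \<in> rord P \<or> (y, x) \<in> rord P))"
    using U(10) c by blast
  have yz: "y \<noteq> z \<Longrightarrow> (((y, z) \<in> hord P \<or> (z, y) \<in> hord P) \<longleftrightarrow> \<not> ((y, z) \<in> rord P \<or> (z, y) \<in> rord P))"
    using U(10) c by blast
  show ?thesis
  proof (cases "x = z \<or> x = y \<or> y = z")
    case True then show ?thesis using a U(4)[OF c(1)] unfolding tord_def by blast
  next
    case False
    hence ne: "x \<noteq> z" "x \<noteq> y" "y \<noteq> z" by auto
    consider "(x,y) \<in> hord P" | "(x,y) \<in> rord P" using a(1) unfolding tord_def by blast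
    then show ?thesis
    proof cases
      case 1
      consider "(y,z) \<in> hord P" | "(y,z) \<in> rord P" using a(2) unfolding tord_def by blast
      then show ?thesis
      proof cases
        case 1
        then show ?thesis using tH[OF \<open>(x,y) \<in> hord P\<close>] unfolding tord_def by blast
      next
        case 2
        show ?thesis
        proof (rule ccontr)
          assume "(x,z) \<notin> tord P"
          hence n: "(x,z) \<notin> hord P" "(x,z) \<notin> rord P" unfolding tord_def by auto
          have "(z,x) \<in> hord P \<or> (z,x) \<in> rord P" using xz[OF ne(1)] n by blast
          then show False
          proof
            assume "(z,x) \<in> hord P"
            hence "(z,y) \<in> hord P" using tH 1 by blast
            thus False using yz[OF ne(3)] 2 by blast
          next
            assume "(z,x) \<in> rord P"
            hence "(y,x) \<in> rord P" using tR 2 by blast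
            thus False using xy[OF ne(2)] 1 by blast
          qed
        qed
      qed
    next
      case 2
      consider "(y,z) \<in> hord P" | "(y,z) \<in> rord P" using a(2) unfolding tord_def by blast
      then show ?thesis
      proof cases
        case 2
        then show ?thesis using tR[OF \<open>(x,y) \<in> rord P\<close>] unfolding tord_def by blast
      next
        case 1
        show ?thesis
        proof (rule ccontr)
          assume "(x,z) \<notin> tord P"
          hence n: "(x,z) \<notin> hord P" "(x,z) \<notin> rord P" unfolding tord_def by auto
          have "(z,x) \<in> hord P \<or> (z,x) \<in> rord P" using xz[OF ne(1)] n by blast
          then show False
          proof
            assume "(z,x) \<in> rord P"
            hence "(z,y) \<in> rord P" using tR 2 by blast
            thus False using yz[OF ne(3)] 1 by blast
          next
            assume "(z,x) \<in> hord P"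
            hence "(y,x) \<in> hord P" using tH 1 by blast
            thus False using xy[OF ne(2)] 2 by blast
          qed
        qed
      qed
    qed
  qed
qed

definition rk :: "'a pposet \<Rightarrow> 'a \<Rightarrow> nat" where
  "rk P x = card {y \<in> carrier_pp P. (y,x) \<in> tord P \<and> y \<noteq> x}"

lemma rk_strict:
  assumes pp: "plane_poset P" and xy: "(x,y) \<in> tord P" "x \<noteq> y"
  shows "rk P x < rk P y"
proof -
  have c: "x \<in> carrier_pp P" "y \<in> carrier_pp P" using xy tord_sub[OF pp] by blast+
  have "{z \<in> carrier_pp P. (z,x) \<in> tord P \<and> z \<noteq> x} \<subset> {z \<in> carrier_pp P. (z,y) \<in> tord P \<and> z \<noteq> y}"
  proof
    show "{z \<in> carrier_pp P. (z,x) \<in> tord P \<and> z \<noteq> x} \<subseteq> {z \<in> carrier_pp P. (z,y) \<in> tord P \<and> z \<noteq> y}"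
    proof
      fix z assume z: "z \<in> {z \<in> carrier_pp P. (z,x) \<in> tord P \<and> z \<noteq> x}"
      hence zy: "(z,y) \<in> tord P" using tord_trans[OF pp _ xy(1)] by blast
      have "z \<noteq> y"
      proof
        assume "z = y" thus False using z xy tord_antisym[OF pp, of x y] by blast
      qed
      thus "z \<in> {z \<in> carrier_pp P. (z,y) \<in> tord P \<and> z \<noteq> y}" using z zy by blast
    qed
    show "{z \<in> carrier_pp P. (z,x) \<in> tord P \<and> z \<noteq> x} \<noteq> {z \<in> carrier_pp P. (z,y) \<in> tord P \<and> z \<noteq> y}"
      using c xy by blast
  qed
  moreover have "finite {z \<in> carrier_pp P. (z,y) \<in> tord P \<and> z \<noteq> y}"
    using pp_unfold(1)[OF pp] by simp
  ultimately show ?thesis unfolding rk_def by (simp add: psubset_card_mono)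
qed

lemma rk_le_iff:
  assumes pp: "plane_poset P" and c: "x \<in> carrier_pp P" "y \<in> carrier_pp P"
  shows "(x,y) \<in> tord P \<longleftrightarrow> rk P x \<le> rk P y"
proof
  assume "(x,y) \<in> tord P" thus "rk P x \<le> rk P y"
    using rk_strict[OF pp] by (cases "x = y") (auto simp: less_imp_le)
next
  assume le: "rk P x \<le> rk P y"
  show "(x,y) \<in> tord P"
  proof (rule ccontr)
    assume "(x,y) \<notin> tord P"
    hence "(y,x) \<in> tord P" "y \<noteq> x" using tord_total[OF pp c] tord_refl[OF pp c(1)] by auto
    thus False using rk_strict[OF pp] le by fastforce
  qed
qed

lemma rk_inj: assumes pp: "plane_poset P" shows "inj_on (rk P) (carrier_pp P)"
proof (rule inj_onI)
  fix x y assume c: "x \<in> carrier_pp P" "y \<in> carrier_pp P" and e: "rk P x = rk P y"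
  hence "(x,y) \<in> tord P" "(y,x) \<in> tord P" using rk_le_iff[OF pp] by auto
  thus "x = y" using tord_antisym[OF pp] by blast
qed

lemma rk_lt: assumes pp: "plane_poset P" and c: "x \<in> carrier_pp P"
  shows "rk P x < card (carrier_pp P)"
proof -
  have "{y \<in> carrier_pp P. (y,x) \<in> tord P \<and> y \<noteq> x} \<subset> carrier_pp P" using c by blast
  thus ?thesis unfolding rk_def using pp_unfold(1)[OF pp] by (simp add: psubset_card_mono)
qed

lemma rk_bij: assumes pp: "plane_poset P"
  shows "bij_betw (rk P) (carrier_pp P) {..<card (carrier_pp P)}"
proof -
  have "rk P ` carrier_pp P \<subseteq> {..<card (carrier_pp P)}" using rk_lt[OF pp] by auto
  moreover have "card (rk P ` carrier_pp P) = card {..<card (carrier_pp P)}"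
    using card_image[OF rk_inj[OF pp]] by simp
  ultimately have "rk P ` carrier_pp P = {..<card (carrier_pp P)}"
    by (simp add: card_subset_eq)
  thus ?thesis using rk_inj[OF pp] unfolding bij_betw_def by blast
qed

definition good :: "'a pposet \<Rightarrow> 'b pposet \<Rightarrow> ('a \<Rightarrow> 'b) \<Rightarrow> bool" where
  "good P Q f \<longleftrightarrow> f \<in> extensional (carrier_pp P)
      \<and> bij_betw f (carrier_pp P) (carrier_pp Q)
      \<and> (\<forall>x\<in>carrier_pp P. \<forall>y\<in>carrier_pp P. (x, y) \<in> tord P \<longrightarrow> (f x, f y) \<in> tord Q)"

lemma good_rk:
  assumes pp: "plane_poset P" and pq: "plane_poset Q" and g: "good P Q f"
    and x: "x \<in> carrier_pp P"
  shows "rk Q (f x) = rk P x"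
proof -
  have b: "bij_betw f (carrier_pp P) (carrier_pp Q)" and
    m: "\<And>x y. x\<in>carrier_pp P \<Longrightarrow> y\<in>carrier_pp P \<Longrightarrow> (x, y) \<in> tord P \<Longrightarrow> (f x, f y) \<in> tord Q"
    using g unfolding good_def by auto
  have inj: "inj_on f (carrier_pp P)" and im: "f ` carrier_pp P = carrier_pp Q"
    using b unfolding bij_betw_def by auto
  let ?S = "{y \<in> carrier_pp P. (y,x) \<in> tord P \<and> y \<noteq> x}"
  let ?T = "{z \<in> carrier_pp Q. (z,f x) \<in> tord Q \<and> z \<noteq> f x}"
  have fST: "f ` ?S = ?T"
  proof
    show "f ` ?S \<subseteq> ?T"
    proof
      fix z assume "z \<in> f ` ?S"
      then obtain y where y: "y \<in> ?S" "z = f y" by blast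
      have "f y \<noteq> f x" using inj y x unfolding inj_on_def by blast
      moreover have "f y \<in> carrier_pp Q" using im y(1) by blast
      moreover have "(f y, f x) \<in> tord Q" using y(1) m[of y x] x by blast
      ultimately show "z \<in> ?T" unfolding y(2) by (intro CollectI conjI)
    qed
    show "?T \<subseteq> f ` ?S"
    proof
      fix z assume z: "z \<in> ?T"
      then obtain y where y: "y \<in> carrier_pp P" "z = f y" using im by blast
      have ne: "y \<noteq> x" using z unfolding y(2) by auto
      have "(y,x) \<in> tord P"
      proof (rule ccontr)
        assume "(y,x) \<notin> tord P"
        hence "(x,y) \<in> tord P" using tord_total[OF pp x y(1)] by blast
        hence "(f x, f y) \<in> tord Q" using m x y(1) by blast
        moreover have "(f y, f x) \<in> tord Q" using z unfolding y(2) by simp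
        ultimately have "f x = f y" by (rule tord_antisym[OF pq])
        moreover have "z \<noteq> f x" using z by blast
        ultimately show False using y(2) by simp
      qed
      thus "z \<in> f ` ?S" using y ne by blast
    qed
  qed
  have "inj_on f ?S" using inj by (rule inj_on_subset) blast
  hence "card (f ` ?S) = card ?S" by (rule card_image)
  hence "card ?T = card ?S" unfolding fST .
  thus ?thesis unfolding rk_def .
qed

lemma good_unique:
  assumes pp: "plane_poset P" and pq: "plane_poset Q" and g: "good P Q f" "good P Q h"
  shows "f = h"
proof (rule extensionalityI)
  show "f \<in> extensional (carrier_pp P)" "h \<in> extensional (carrier_pp P)"
    using g unfolding good_def by auto
  fix x assume x: "x \<in> carrier_pp P"
  have "f x \<in> carrier_pp Q" "h x \<in> carrier_pp Q"
    using g x unfolding good_def bij_betw_def by auto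
  moreover have "rk Q (f x) = rk Q (h x)" using good_rk[OF pp pq g(1) x] good_rk[OF pp pq g(2) x] by simp
  ultimately show "f x = h x" using inj_onD[OF rk_inj[OF pq]] by metis
qed

lemma good_exists:
  assumes pp: "plane_poset P" and pq: "plane_poset Q"
    and cd: "card (carrier_pp P) = card (carrier_pp Q)"
  shows "\<exists>f. good P Q f"
proof -
  define f where "f = restrict (\<lambda>x. the_inv_into (carrier_pp Q) (rk Q) (rk P x)) (carrier_pp P)"
  have bQ: "bij_betw (rk Q) (carrier_pp Q) {..<card (carrier_pp P)}" using rk_bij[OF pq] cd by simp
  have bP: "bij_betw (rk P) (carrier_pp P) {..<card (carrier_pp P)}" using rk_bij[OF pp] by simp
  have bi: "bij_betw (the_inv_into (carrier_pp Q) (rk Q)) {..<card (carrier_pp P)} (carrier_pp Q)"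
    using bij_betw_the_inv_into[OF bQ] .
  have "bij_betw (the_inv_into (carrier_pp Q) (rk Q) \<circ> rk P) (carrier_pp P) (carrier_pp Q)"
    using bij_betw_trans[OF bP bi] .
  hence b: "bij_betw f (carrier_pp P) (carrier_pp Q)"
    unfolding f_def by (rule bij_betw_cong[THEN iffD1, rotated]) simp
  have rkf: "\<And>x. x \<in> carrier_pp P \<Longrightarrow> rk Q (f x) = rk P x"
  proof -
    fix x assume x: "x \<in> carrier_pp P"
    have "rk P x \<in> {..<card (carrier_pp P)}" using rk_lt[OF pp x] by simp
    thus "rk Q (f x) = rk P x" unfolding f_def using f_the_inv_into_f_bij_betw[OF bQ] x by simp
  qed
  have "\<forall>x\<in>carrier_pp P. \<forall>y\<in>carrier_pp P. (x, y) \<in> tord P \<longrightarrow> (f x, f y) \<in> tord Q"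
  proof (intro ballI impI)
    fix x y assume c: "x \<in> carrier_pp P" "y \<in> carrier_pp P" and t: "(x,y) \<in> tord P"
    have "f x \<in> carrier_pp Q" "f y \<in> carrier_pp Q" using b c unfolding bij_betw_def by auto
    thus "(f x, f y) \<in> tord Q" using rk_le_iff[OF pq] rk_le_iff[OF pp c] t rkf c by simp
  qed
  moreover have "f \<in> extensional (carrier_pp P)" unfolding f_def by simp
  ultimately show ?thesis using b unfolding good_def by blast
qed

lemma theta_good:
  assumes pp: "plane_poset P" and pq: "plane_poset Q"
    and cd: "card (carrier_pp P) = card (carrier_pp Q)"
  shows "good P Q (theta P Q)"
proof -
  obtain f where f: "good P Q f" using good_exists[OF assms] by blast
  have "theta P Q = (THE f. good P Q f)" unfolding theta_def good_def by (rule refl)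
  also have "\<dots> = f" by (rule the_equality[where P="good P Q", OF f good_unique[OF pp pq _ f]])
  finally show ?thesis using f by simp
qed

lemma iota_simps: "carrier_pp (iota P) = carrier_pp P" "hord (iota P) = rord P" "rord (iota P) = hord P"
  by (simp_all add: iota_def carrier_pp_def hord_def rord_def)

lemma tord_iota: "tord (iota P) = tord P"
  unfolding tord_def iota_simps by (rule Un_commute)

lemma theta_iota: "theta (iota Q) (iota P) = theta Q P"
  unfolding theta_def iota_simps tord_iota ..

lemma key:
  assumes pp: "plane_poset P" and pq: "plane_poset Q" and g: "good P Q f"
  shows "(\<forall>x\<in>carrier_pp P. \<forall>y\<in>carrier_pp P. (f x, f y) \<in> hord Q \<longrightarrow> (x, y) \<in> hord P)
     \<longleftrightarrow> (\<forall>x\<in>carrier_pp P. \<forall>y\<in>carrier_pp P. (x, y) \<in> rord P \<longrightarrow> (f x, f y) \<in> rord Q)"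
proof -
  have b: "bij_betw f (carrier_pp P) (carrier_pp Q)" and
    m: "\<And>x y. x\<in>carrier_pp P \<Longrightarrow> y\<in>carrier_pp P \<Longrightarrow> (x, y) \<in> tord P \<Longrightarrow> (f x, f y) \<in> tord Q"
    using g unfolding good_def by auto
  have inj: "\<And>x y. x\<in>carrier_pp P \<Longrightarrow> y\<in>carrier_pp P \<Longrightarrow> f x = f y \<Longrightarrow> x = y"
    using b unfolding bij_betw_def inj_on_def by blast
  have fc: "\<And>x. x\<in>carrier_pp P \<Longrightarrow> f x \<in> carrier_pp Q"
    using b unfolding bij_betw_def by blast
  note UP = pp_unfold[OF pp] and UQ = pp_unfold[OF pq]
  show ?thesis
  proof
    assume A: "\<forall>x\<in>carrier_pp P. \<forall>y\<in>carrier_pp P. (f x, f y) \<in> hord Q \<longrightarrow> (x, y) \<in> hord P"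
    show "\<forall>x\<in>carrier_pp P. \<forall>y\<in>carrier_pp P. (x, y) \<in> rord P \<longrightarrow> (f x, f y) \<in> rord Q"
    proof (intro ballI impI)
      fix x y assume c: "x \<in> carrier_pp P" "y \<in> carrier_pp P" and r: "(x,y) \<in> rord P"
      show "(f x, f y) \<in> rord Q"
      proof (cases "x = y")
        case True thus ?thesis using UQ(5)[OF fc[OF c(1)]] by simp
      next
        case False
        have "(f x, f y) \<in> tord Q" using m[OF c] r unfolding tord_def by blast
        moreover have "(f x, f y) \<notin> hord Q"
        proof
          assume "(f x, f y) \<in> hord Q"
          hence "(x,y) \<in> hord P" using A c by blast
          thus False using UP(10)[OF c False] r by blast
        qed
        ultimately show ?thesis unfolding tord_def by blast
      qed
    qed
  next
    assume B: "\<forall>x\<in>carrier_pp P. \<forall>y\<in>carrier_pp P. (x, y) \<in> rord P \<longrightarrow> (f x, f y) \<in> rord Q"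
    show "\<forall>x\<in>carrier_pp P. \<forall>y\<in>carrier_pp P. (f x, f y) \<in> hord Q \<longrightarrow> (x, y) \<in> hord P"
    proof (intro ballI impI)
      fix x y assume c: "x \<in> carrier_pp P" "y \<in> carrier_pp P" and h: "(f x, f y) \<in> hord Q"
      show "(x, y) \<in> hord P"
      proof (cases "x = y")
        case True thus ?thesis using UP(4)[OF c(1)] by simp
      next
        case False
        have fne: "f x \<noteq> f y" using inj c False by blast
        have iq: "((f x, f y) \<in> hord Q \<or> (f y, f x) \<in> hord Q) = (\<not> ((f x, f y) \<in> rord Q \<or> (f y, f x) \<in> rord Q))"
          using UQ(10)[OF fc[OF c(1)] fc[OF c(2)] fne] .
        have nr: "(x,y) \<notin> rord P" "(y,x) \<notin> rord P"
          using B c iq h by blast+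
        hence "(x,y) \<in> hord P \<or> (y,x) \<in> hord P" using UP(10)[OF c False] by blast
        moreover have "(y,x) \<notin> hord P"
        proof
          assume "(y,x) \<in> hord P"
          hence "(f y, f x) \<in> tord Q" using m[OF c(2) c(1)] unfolding tord_def by blast
          moreover have "(f x, f y) \<in> tord Q" using h unfolding tord_def by blast
          ultimately show False using tord_antisym[OF pq] fne by blast
        qed
        ultimately show ?thesis by blast
      qed
    qed
  qed
qed

theorem proposition18:
  fixes P :: "'a pposet" and Q :: "'b pposet" and n :: nat
  assumes "plane_poset P" and "plane_poset Q"
    and "card (carrier_pp P) = n" and "card (carrier_pp Q) = n"
  shows "pp_le P Q \<longleftrightarrow> pp_le (iota Q) (iota P)"
proof -
  note pp = assms(1) and pq = assms(2)
  have cd: "card (carrier_pp P) = card (carrier_pp Q)" using assms by simp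
  define f where "f = theta P Q"
  define g where "g = theta Q P"
  have gf: "good P Q f" unfolding f_def by (rule theta_good[OF pp pq cd])
  have gg: "good Q P g" unfolding g_def by (rule theta_good[OF pq pp cd[symmetric]])
  have fc: "\<And>x. x\<in>carrier_pp P \<Longrightarrow> f x \<in> carrier_pp Q"
    using gf unfolding good_def bij_betw_def by blast
  have gc: "\<And>x. x\<in>carrier_pp Q \<Longrightarrow> g x \<in> carrier_pp P"
    using gg unfolding good_def bij_betw_def by blast
  have fsurj: "\<And>u. u\<in>carrier_pp Q \<Longrightarrow> \<exists>x\<in>carrier_pp P. u = f x"
    using gf unfolding good_def bij_betw_def by blast
  have gfx: "\<And>x. x\<in>carrier_pp P \<Longrightarrow> g (f x) = x"
  proof -
    fix x assume x: "x \<in> carrier_pp P"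
    have "rk P (g (f x)) = rk P x"
      using good_rk[OF pq pp gg fc[OF x]] good_rk[OF pp pq gf x] by simp
    thus "g (f x) = x" using inj_onD[OF rk_inj[OF pp] _ gc[OF fc[OF x]] x] by blast
  qed
  have L: "pp_le P Q \<longleftrightarrow> (\<forall>x\<in>carrier_pp P. \<forall>y\<in>carrier_pp P. (f x, f y) \<in> hord Q \<longrightarrow> (x, y) \<in> hord P)"
    unfolding pp_le_def f_def ..
  have R: "pp_le (iota Q) (iota P) \<longleftrightarrow> (\<forall>u\<in>carrier_pp Q. \<forall>v\<in>carrier_pp Q. (g u, g v) \<in> rord P \<longrightarrow> (u, v) \<in> rord Q)"
    unfolding pp_le_def theta_iota iota_simps g_def ..
  have R2: "(\<forall>u\<in>carrier_pp Q. \<forall>v\<in>carrier_pp Q. (g u, g v) \<in> rord P \<longrightarrow> (u, v) \<in> rord Q)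
     \<longleftrightarrow> (\<forall>x\<in>carrier_pp P. \<forall>y\<in>carrier_pp P. (x, y) \<in> rord P \<longrightarrow> (f x, f y) \<in> rord Q)"
  proof
    assume H: "\<forall>u\<in>carrier_pp Q. \<forall>v\<in>carrier_pp Q. (g u, g v) \<in> rord P \<longrightarrow> (u, v) \<in> rord Q"
    show "\<forall>x\<in>carrier_pp P. \<forall>y\<in>carrier_pp P. (x, y) \<in> rord P \<longrightarrow> (f x, f y) \<in> rord Q"
    proof (intro ballI impI)
      fix x y assume c: "x \<in> carrier_pp P" "y \<in> carrier_pp P" and r: "(x, y) \<in> rord P"
      have "(g (f x), g (f y)) \<in> rord P" using r gfx c by simp
      thus "(f x, f y) \<in> rord Q" using H fc c by blast
    qed
  next
    assume H: "\<forall>x\<in>carrier_pp P. \<forall>y\<in>carrier_pp P. (x, y) \<in> rord P \<longrightarrow> (f x, f y) \<in> rord Q"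
    show "\<forall>u\<in>carrier_pp Q. \<forall>v\<in>carrier_pp Q. (g u, g v) \<in> rord P \<longrightarrow> (u, v) \<in> rord Q"
    proof (intro ballI impI)
      fix u v assume c: "u \<in> carrier_pp Q" "v \<in> carrier_pp Q" and r: "(g u, g v) \<in> rord P"
      obtain x where x: "x \<in> carrier_pp P" "u = f x" using fsurj c(1) by blast
      obtain y where y: "y \<in> carrier_pp P" "v = f y" using fsurj c(2) by blast
      have "(x, y) \<in> rord P" using r gfx x y by simp
      thus "(u, v) \<in> rord Q" using H x y by simp
    qed
  qed
  show ?thesis using L R R2 key[OF pp pq gf] by simp
qed

end
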